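(* Let $\Omega\subset\mathbb{R}^3$ be open, bounded and convex with $\mathcal{L}^3(\Omega)=1$, let $N\geq2$, fix a mass vector $\mathbf{m}$, let $T\in(0,\infty)$ and $\overline{\mathbf{z}}=(\overline{z}_1,\dots,\overline{z}_N)\in D$. Let $R>0$ be such that $\Omega\subset B_R(0)$. If $\mathbf{z}=(z_1,\dots,z_N):[0,T]\to D$ is a $C^1$-solution of $\dot{\mathbf{z}}=J_N(\mathbf{z}-\mathbf{x}(\mathbf{z}))$, $\mathbf{z}(0)=\overline{\mathbf{z}}$, then for each $i\in\{1,\dots,N\}$, $$|z_i(t)|\leq|\overline{z}_i|+RT\quad\forall t\in[0,T],\qquad |\dot z_i(t)|\leq|\overline{z}_i|+R(1+T)\quad\forall t\in(0,T).$$
   Context: $J$ is the $3\times3$ matrix with rows $(0,-1,0),(1,0,0),(0,0,0)$ and $J_N=\mathrm{diag}(J,\dots,J)\in\mathbb{R}^{3N\times3N}$. $D=\{\mathbf{z}\in\mathbb{R}^{3N}: z_i\neq z_j\text{ for }i\neq j\}$. Mass vector: $\mathbf{m}=(m_1,\dots,m_N)$ with $m_i>0$, $\sum m_i=1$. Laguerre cells: $C_i(\mathbf{z},\mathbf{w})=\{x\in\Omega:|x-z_i|^2-w_i\leq|x-z_j|^2-w_j\ \forall j\}$. For $\mathbf{z}\in D$, $\mathbf{w}_*(\mathbf{z})$ is the unique $\mathbf{w}\in\mathbb{R}^N$ with $w_N=0$ and $\mathcal{L}^3(C_i(\mathbf{z},\mathbf{w}))=m_i$ for all $i$; the optimal centroid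 map $\mathbf{x}=(x_1,\dots,x_N)$ has $x_i(\mathbf{z})$ equal to the centroid $\frac{1}{m_i}\int_{C_i(\mathbf{z},\mathbf{w}_*(\mathbf{z}))}x\,dx$. *)

theory Defs
  imports "HOL-Analysis.Analysis"
begin

text \<open>Particles are indexed by 0,...,N-1 (the paper's 1,...,N); a configuration is
  a function nat => real^3, only the values at indices below N matter.\<close>

definition Jmat :: "real^3 \<Rightarrow> real^3" where
  "Jmat v = vector [- (v$2), v$1, 0]"

definition in_D :: "nat \<Rightarrow> (nat \<Rightarrow> real^3) \<Rightarrow> bool" where
  "in_D N z \<longleftrightarrow> (\<forall>i<N. \<forall>j<N. i \<noteq> j \<longrightarrow> z i \<noteq> z j)"

definition laguerre_cell ::
  "(real^3) set \<Rightarrow> nat \<Rightarrow> (nat \<Rightarrow> real^3) \<Rightarrow> (nat \<Rightarrow> real) \<Rightarrow> nat \<Rightarrow> (real^3) set" where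
  "laguerre_cell \<Omega> N z w i =
     {x \<in> \<Omega>. \<forall>j<N. (norm (x - z i))\<^sup>2 - w i \<le> (norm (x - z j))\<^sup>2 - w j}"

text \<open>Optimal weights: the unique w with w_N = 0 (index N-1 here) and cell masses m_i;
  entries with index \<ge> N are fixed to 0 so that the choice is unique.\<close>
definition w_star ::
  "(real^3) set \<Rightarrow> nat \<Rightarrow> (nat \<Rightarrow> real) \<Rightarrow> (nat \<Rightarrow> real^3) \<Rightarrow> (nat \<Rightarrow> real)" where
  "w_star \<Omega> N m z = (THE w. w (N - 1) = 0 \<and> (\<forall>i\<ge>N. w i = 0) \<and>
      (\<forall>i<N. measure lebesgue (laguerre_cell \<Omega> N z w i) = m i))"

definition centroid_map ::
  "(real^3) set \<Rightarrow> nat \<Rightarrow> (nat \<Rightarrow> real) \<Rightarrow> (nat \<Rightarrow> real^3) \<Rightarrow> nat \<Rightarrow> real^3" where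
  "centroid_map \<Omega> N m z i =
     (1 / m i) *\<^sub>R integral (laguerre_cell \<Omega> N z (w_star \<Omega> N m z) i) (\<lambda>x. x)"

end

theory Submission
  imports Defs
begin


locale lag =
  fixes \<Omega> :: "(real^3) set" and N :: nat and m :: "nat \<Rightarrow> real" and R :: real
    and z :: "nat \<Rightarrow> real^3"
  assumes opn: "open \<Omega>" and bnd: "\<Omega> \<subseteq> ball 0 R" and cvx: "convex \<Omega>"
    and meas1: "measure lebesgue \<Omega> = 1"
    and N2: "N \<ge> 2" and mpos: "\<forall>i<N. m i > 0" and msum: "(\<Sum>i<N. m i) = 1"
    and D: "in_D N z"
begin

abbreviation C where "C w i \<equiv> laguerre_cell \<Omega> N z w i"
abbreviation f where "f w i \<equiv> measure lebesgue (C w i)"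

lemma bounded_Omega: "bounded \<Omega>"
  using bnd bounded_ball bounded_subset by blast

lemma Omega_lmeas: "\<Omega> \<in> lmeasurable"
  using bounded_Omega opn lmeasurable_open by blast

lemma cell_eq: "C w i = \<Omega> \<inter> (\<Inter>j\<in>{..<N}. {x. (norm (x - z i))\<^sup>2 - w i \<le> (norm (x - z j))\<^sup>2 - w j})"
  unfolding laguerre_cell_def by auto

lemma cell_closed: "closed (\<Inter>j\<in>{..<N}. {x::real^3. (norm (x - z i))\<^sup>2 - w i \<le> (norm (x - z j))\<^sup>2 - w j})"
  by (intro closed_INT ballI closed_Collect_le continuous_intros)

lemma closed_leb: "closed (T::(real^3) set) \<Longrightarrow> T \<in> sets lebesgue"
  by (metis borel_closed sets_completionI_sets sets_lborel)

lemma cell_lmeas: "C w i \<in> lmeasurable"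
  unfolding cell_eq
  by (intro fmeasurable_Int_fmeasurable Omega_lmeas closed_leb cell_closed)

lemma cell_sub: "C w i \<subseteq> \<Omega>"
  unfolding laguerre_cell_def by auto

lemma cell_mono:
  assumes "\<And>j. j < N \<Longrightarrow> w i - w j \<le> w' i - w' j"
  shows "C w i \<subseteq> C w' i"
  using assms unfolding laguerre_cell_def by (auto, smt (verit))

lemma f_mono:
  assumes "\<And>j. j < N \<Longrightarrow> w i - w j \<le> w' i - w' j"
  shows "f w i \<le> f w' i"
  using cell_mono[of w i w', OF assms] cell_lmeas by (meson fmeasurableD measure_mono_fmeasurable)

lemma overlap_negl:
  assumes "i < N" "j < N" "i \<noteq> j"
  shows "negligible (C w i \<inter> C w j)"
proof -
  have "C w i \<inter> C w j \<subseteq> {x. (2 *\<^sub>R (z j - z i)) \<bullet> x = (norm (z j))\<^sup>2 - (norm (z i))\<^sup>2 + w i - w j}"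
  proof
    fix x assume "x \<in> C w i \<inter> C w j"
    then have "(norm (x - z i))\<^sup>2 - w i = (norm (x - z j))\<^sup>2 - w j"
      using assms unfolding laguerre_cell_def by force
    then show "x \<in> {x. (2 *\<^sub>R (z j - z i)) \<bullet> x = (norm (z j))\<^sup>2 - (norm (z i))\<^sup>2 + w i - w j}"
      by (simp add: power2_norm_eq_inner inner_diff_left inner_diff_right inner_commute algebra_simps)
  qed
  moreover have "z j \<noteq> z i" using D assms unfolding in_D_def by auto
  then have "2 *\<^sub>R (z j - z i) \<noteq> 0" by simp
  ultimately show ?thesis using negligible_hyperplane negligible_subset by blast
qed

lemma union_measure:
  assumes "I \<subseteq> {..<N}"
  shows "measure lebesgue (\<Union>i\<in>I. C w i) = (\<Sum>i\<in>I. f w i)"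
proof -
  have "finite I" using assms finite_subset by blast
  then show ?thesis
    apply (rule measure_negligible_finite_Union_image)
    using cell_lmeas apply blast
    using overlap_negl assms unfolding pairwise_def by blast
qed

lemma cover: "(\<Union>i\<in>{..<N}. C w i) = \<Omega>"
proof
  show "(\<Union>i\<in>{..<N}. C w i) \<subseteq> \<Omega>" using cell_sub by blast
  show "\<Omega> \<subseteq> (\<Union>i\<in>{..<N}. C w i)"
  proof
    fix x assume x: "x \<in> \<Omega>"
    define g where "g j = (norm (x - z j))\<^sup>2 - w j" for j
    have ne: "g ` {..<N} \<noteq> {}" using N2 by (auto simp: lessThan_empty_iff)
    have "Min (g ` {..<N}) \<in> g ` {..<N}" using ne by (intro Min_in) auto
    then obtain i where i: "i < N" "g i = Min (g ` {..<N})" by auto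
    have "\<forall>j<N. g i \<le> g j" using i by simp
    then have "x \<in> C w i" using x unfolding laguerre_cell_def g_def by auto
    then show "x \<in> (\<Union>i\<in>{..<N}. C w i)" using i by auto
  qed
qed

lemma sum_f: "(\<Sum>i<N. f w i) = 1"
  using union_measure[of "{..<N}" w] cover meas1 by simp

lemma usc:
  assumes conv: "\<forall>j<N. (\<lambda>n. v n j) \<longlonglongrightarrow> w j" and e: "e > 0" and i: "i < N"
  shows "eventually (\<lambda>n. f (v n) i < f w i + e) sequentially"
proof -
  define B where "B n = (\<Union>k\<in>{n..}. C (v k) i)" for n
  have Bs: "B n \<in> sets lebesgue" for n
    unfolding B_def using cell_lmeas by (intro sets.countable_UN') auto
  have Bsub: "B n \<subseteq> \<Omega>" for n unfolding B_def using cell_sub by blast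
  have Bl: "B n \<in> lmeasurable" for n
    using Bs Bsub Omega_lmeas by (meson fmeasurableI2)
  have dec: "decseq B" unfolding decseq_def B_def by (auto, meson atLeast_iff order_trans)
  have lim: "(\<lambda>n. measure lebesgue (B n)) \<longlonglongrightarrow> measure lebesgue (\<Inter>n. B n)"
    apply (rule Lim_measure_decseq)
    using Bs dec apply auto[2]
    using Bl fmeasurable_def by (metis less_irrefl top.not_eq_extremum mem_Collect_eq)
  have sub: "(\<Inter>n. B n) \<subseteq> C w i"
  proof
    fix x assume x: "x \<in> (\<Inter>n. B n)"
    have xO: "x \<in> \<Omega>" using x Bsub by blast
    have "(norm (x - z i))\<^sup>2 - w i \<le> (norm (x - z j))\<^sup>2 - w j" if j: "j < N" for j
    proof (rule ccontr)
      define a where "a = (norm (x - z i))\<^sup>2 - (norm (x - z j))\<^sup>2"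
      assume "\<not> ?thesis"
      then have lt: "w i - w j < a" unfolding a_def by simp
      have "(\<lambda>n. v n i - v n j) \<longlonglongrightarrow> w i - w j"
        using conv i j by (intro tendsto_diff) auto
      from order_tendstoD(2)[OF this lt] obtain n0 where n0: "\<forall>n\<ge>n0. v n i - v n j < a"
        unfolding eventually_sequentially by auto
      from x have "x \<in> B n0" by blast
      then obtain k where k: "k \<ge> n0" "x \<in> C (v k) i" unfolding B_def by auto
      then have "a \<le> v k i - v k j" using j unfolding laguerre_cell_def a_def by force
      with n0 k show False by force
    qed
    then show "x \<in> C w i" using xO unfolding laguerre_cell_def by auto
  qed
  have "measure lebesgue (\<Inter>n. B n) \<le> f w i"
    apply (rule measure_mono_fmeasurable[OF sub])
    using Bs apply (intro sets.countable_INT') apply auto[2]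
    using Bs apply blast
    by (rule cell_lmeas)
  then have "measure lebesgue (\<Inter>n. B n) < f w i + e" using e by simp
  from order_tendstoD(2)[OF lim this] have ev: "eventually (\<lambda>n. measure lebesgue (B n) < f w i + e) sequentially" .
  have le: "f (v n) i \<le> measure lebesgue (B n)" for n
    apply (rule measure_mono_fmeasurable)
    using Bl cell_lmeas unfolding B_def by auto
  show ?thesis using ev by (rule eventually_mono) (use le in \<open>rule le_less_trans\<close>)
qed

lemma f_cont:
  assumes conv: "\<forall>j<N. (\<lambda>n. v n j) \<longlonglongrightarrow> w j" and i: "i < N"
  shows "(\<lambda>n. f (v n) i) \<longlonglongrightarrow> f w i"
proof (rule order_tendstoI)
  fix a assume "f w i < a"
  then show "eventually (\<lambda>n. f (v n) i < a) sequentially"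
    using usc[OF conv, of "a - f w i" i] i by simp
next
  fix a assume a: "a < f w i"
  define e where "e = f w i - a"
  have e: "e > 0" using a e_def by simp
  have Npos: "real N > 0" using N2 by simp
  define A where "A = {..<N} - {i}"
  have finA: "finite A" unfolding A_def by simp
  have cardA: "card A = N - 1" unfolding A_def using i by simp
  have "\<forall>j\<in>A. eventually (\<lambda>n. f (v n) j < f w j + e / N) sequentially"
    using usc[OF conv] e Npos unfolding A_def by auto
  then have "eventually (\<lambda>n. \<forall>j\<in>A. f (v n) j < f w j + e / N) sequentially"
    using finA by (simp add: eventually_ball_finite)
  then show "eventually (\<lambda>n. a < f (v n) i) sequentially"
  proof (rule eventually_mono)
    fix n assume H: "\<forall>j\<in>A. f (v n) j < f w j + e / N"
    have s1: "f (v n) i + (\<Sum>j\<in>A. f (v n) j) = 1"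
      using sum_f[of "v n"] sum.remove[of "{..<N}" i "\<lambda>j. f (v n) j"] i unfolding A_def by simp
    have s2: "f w i + (\<Sum>j\<in>A. f w j) = 1"
      using sum_f[of w] sum.remove[of "{..<N}" i "\<lambda>j. f w j"] i unfolding A_def by simp
    have "(\<Sum>j\<in>A. f (v n) j) \<le> (\<Sum>j\<in>A. f w j + e / N)"
      using H by (intro sum_mono) (simp add: less_imp_le)
    also have "\<dots> = (\<Sum>j\<in>A. f w j) + real (N - 1) * (e / N)"
      by (simp add: sum.distrib cardA)
    also have "real (N - 1) * (e / N) < e"
    proof -
      have "real (N - 1) < real N" using N2 by simp
      then have "real (N - 1) * (e / N) < real N * (e / N)"
        using e Npos by (intro mult_strict_right_mono) auto
      then show ?thesis using Npos by simp
    qed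
    then have "(\<Sum>j\<in>A. f w j) + real (N - 1) * (e / N) < (\<Sum>j\<in>A. f w j) + e" by simp
    finally show "a < f (v n) i" using s1 s2 e_def by linarith
  qed
qed

definition K where "K = (\<Sum>k<N. (R + norm (z k))\<^sup>2)"

lemma distK: assumes "x \<in> \<Omega>" "k < N" shows "(norm (x - z k))\<^sup>2 \<le> K"
proof -
  have "norm x < R" using assms bnd by auto
  then have "norm (x - z k) \<le> R + norm (z k)" by (smt (verit) norm_triangle_ineq4)
  then have "(norm (x - z k))\<^sup>2 \<le> (R + norm (z k))\<^sup>2" by (simp add: power_mono)
  also have "\<dots> \<le> K" unfolding K_def using assms(2)
    by (intro member_le_sum) auto
  finally show ?thesis .
qed

lemma empty_cell: assumes "k < N" "w i + K < w k" shows "C w i = {}"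
proof (rule ccontr)
  assume "C w i \<noteq> {}"
  then obtain x where x: "x \<in> C w i" by auto
  then have "x \<in> \<Omega>" "(norm (x - z i))\<^sup>2 - w i \<le> (norm (x - z k))\<^sup>2 - w k"
    using assms unfolding laguerre_cell_def by auto
  moreover have "(norm (x - z k))\<^sup>2 \<le> K" using distK calculation assms by auto
  ultimately show False using assms by (smt (verit) zero_le_power2)
qed

definition W where "W = {w. w (N - 1) = 0 \<and> (\<forall>i\<ge>N. w i = 0) \<and> (\<forall>i<N - 1. f w i \<le> m i)}"

definition w0 where "w0 = (\<lambda>i. if i < N - 1 then -(K+1) else 0)"

lemma w0_W: "w0 \<in> W"
proof -
  have "f w0 i \<le> m i" if "i < N - 1" for i
  proof -
    have "C w0 i = {}" using that N2 by (intro empty_cell[of "N - 1"]) (auto simp: w0_def)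
    moreover have "i < N" using that by simp
    ultimately show ?thesis using mpos by (simp add: less_imp_le)
  qed
  then show ?thesis unfolding W_def w0_def by auto
qed

lemma N_split: "(\<Sum>i<N. g i) = (\<Sum>i<N - 1. g i) + g (N - 1)" for g :: "nat \<Rightarrow> real"
proof -
  have "N = Suc (N - 1)" using N2 by simp
  then show ?thesis by (metis sum.lessThan_Suc)
qed

lemma W_bound: assumes "w \<in> W" "i < N" shows "w i \<le> K"
proof (rule ccontr)
  assume "\<not> w i \<le> K"
  then have "C w (N - 1) = {}" using assms by (intro empty_cell[of i]) (auto simp: W_def)
  then have "(\<Sum>j<N - 1. f w j) = 1" using sum_f[of w] N_split[of "\<lambda>j. f w j"] by simp
  moreover have "(\<Sum>j<N - 1. f w j) \<le> (\<Sum>j<N - 1. m j)" using assms unfolding W_def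
    by (intro sum_mono) auto
  moreover have "(\<Sum>j<N - 1. m j) < 1" using msum N_split[of m] mpos[rule_format, of "N - 1"] N2 by simp
  ultimately show False by simp
qed

lemma W_max: assumes "w \<in> W" "w' \<in> W" shows "(\<lambda>i. max (w i) (w' i)) \<in> W"
proof -
  let ?v = "\<lambda>i. max (w i) (w' i)"
  have "f ?v i \<le> m i" if "i < N - 1" for i
  proof (cases "w' i \<le> w i")
    case True
    then have "f ?v i \<le> f w i" by (intro f_mono) auto
    then show ?thesis using assms that unfolding W_def by force
  next
    case False
    then have "f ?v i \<le> f w' i" by (intro f_mono) auto
    then show ?thesis using assms that unfolding W_def by force
  qed
  then show ?thesis using assms unfolding W_def by auto
qed

definition wstar where "wstar i = (if i < N then (SUP w\<in>W. w i) else 0)"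

lemma W_ne: "W \<noteq> {}" using w0_W by auto

lemma bdd: "i < N \<Longrightarrow> bdd_above ((\<lambda>w. w i) ` W)"
  by (rule bdd_aboveI2[where M=K]) (rule W_bound)

lemma upper: assumes "w \<in> W" shows "w i \<le> wstar i"
proof (cases "i < N")
  case True then show ?thesis unfolding wstar_def using cSUP_upper[OF assms bdd[OF True]] by simp
next
  case False then show ?thesis using assms unfolding wstar_def W_def by simp
qed

lemma approx: assumes "d > 0" shows "\<exists>v\<in>W. \<forall>j<N. wstar j - d < v j"
proof -
  have "n \<le> N \<longrightarrow> (\<exists>v\<in>W. \<forall>j<n. wstar j - d < v j)" for n
  proof (induction n)
    case 0 then show ?case using w0_W by auto
  next
    case (Suc n)
    show ?case
    proof
      assume n: "Suc n \<le> N"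
      then obtain v where v: "v \<in> W" "\<forall>j<n. wstar j - d < v j" using Suc by auto
      have "wstar n - d < (SUP w\<in>W. w n)" using n assms unfolding wstar_def by simp
      then obtain u where u: "u \<in> W" "wstar n - d < u n"
        using less_cSUP_iff[OF W_ne bdd] n by auto
      show "\<exists>v\<in>W. \<forall>j<Suc n. wstar j - d < v j"
        apply (rule bexI[of _ "\<lambda>i. max (v i) (u i)"])
        using v u W_max less_Suc_eq by auto
    qed
  qed
  then show ?thesis by blast
qed

lemma wstar_W: "wstar \<in> W"
proof -
  define vs where "vs n = (SOME v. v \<in> W \<and> (\<forall>j<N. wstar j - inverse (real (Suc n)) < v j))" for n
  have vs: "vs n \<in> W \<and> (\<forall>j<N. wstar j - inverse (real (Suc n)) < vs n j)" for n
  proof -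
    have ex: "\<exists>v. v \<in> W \<and> (\<forall>j<N. wstar j - inverse (real (Suc n)) < v j)"
      using approx[of "inverse (real (Suc n))"] by auto
    show ?thesis unfolding vs_def by (rule someI_ex[OF ex])
  qed
  have conv: "\<forall>j<N. (\<lambda>n. vs n j) \<longlonglongrightarrow> wstar j"
  proof (intro allI impI)
    fix j assume j: "j < N"
    have l: "(\<lambda>n. wstar j - inverse (real (Suc n))) \<longlonglongrightarrow> wstar j"
      using tendsto_diff[OF tendsto_const LIMSEQ_inverse_real_of_nat] by simp
    show "(\<lambda>n. vs n j) \<longlonglongrightarrow> wstar j"
      apply (rule tendsto_sandwich[OF _ _ l tendsto_const])
      using vs j upper by (auto intro!: always_eventually less_imp_le)
  qed
  have "f wstar i \<le> m i" if i: "i < N - 1" for i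
    apply (rule LIMSEQ_le_const2[OF f_cont[OF conv]])
    using i vs unfolding W_def by auto
  moreover have "wstar (N - 1) = 0"
  proof -
    have "(\<lambda>w. w (N - 1)) ` W = {0}" using W_ne unfolding W_def by auto
    then show ?thesis unfolding wstar_def using N2 by simp
  qed
  ultimately show ?thesis unfolding W_def wstar_def by auto
qed

lemma wstar_eq: assumes k: "k < N - 1" shows "f wstar k = m k"
proof (rule ccontr)
  assume "f wstar k \<noteq> m k"
  then have lt: "f wstar k < m k" using wstar_W k unfolding W_def by force
  define vv where "vv n = wstar(k := wstar k + inverse (real (Suc n)))" for n
  have conv: "\<forall>j<N. (\<lambda>n. vv n j) \<longlonglongrightarrow> wstar j"
  proof (intro allI impI)
    fix j assume j: "j < N"
    show "(\<lambda>n. vv n j) \<longlonglongrightarrow> wstar j"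
    proof (cases "j = k")
      case True
      then show ?thesis unfolding vv_def
        using tendsto_add[OF tendsto_const LIMSEQ_inverse_real_of_nat, of "wstar k"] by simp
    next
      case False then show ?thesis unfolding vv_def by simp
    qed
  qed
  have "k < N" using k by simp
  from order_tendstoD(2)[OF f_cont[OF conv this] lt]
  obtain n where n: "f (vv n) k < m k" unfolding eventually_sequentially by auto
  have "vv n \<in> W"
  proof -
    have "f (vv n) j \<le> m j" if j: "j < N - 1" for j
    proof (cases "j = k")
      case True then show ?thesis using n by simp
    next
      case False
      then have "f (vv n) j \<le> f wstar j"
        by (intro f_mono) (auto simp: vv_def)
      then show ?thesis using wstar_W j unfolding W_def by force
    qed
    then show ?thesis using wstar_W k unfolding W_def vv_def by auto
  qed
  then have "vv n k \<le> wstar k" by (rule upper)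
  then show False unfolding vv_def by simp
qed

lemma existence: "\<exists>w. w (N - 1) = 0 \<and> (\<forall>i\<ge>N. w i = 0) \<and> (\<forall>i<N. f w i = m i)"
proof (intro exI conjI allI impI)
  show "wstar (N - 1) = 0" "\<And>i. N \<le> i \<Longrightarrow> wstar i = 0" using wstar_W unfolding W_def by auto
  fix i assume i: "i < N"
  show "f wstar i = m i"
  proof (cases "i < N - 1")
    case True then show ?thesis using wstar_eq by simp
  next
    case False
    then have i: "i = N - 1" using i by simp
    have "(\<Sum>j<N - 1. f wstar j) = (\<Sum>j<N - 1. m j)" using wstar_eq by simp
    then show ?thesis using sum_f[of wstar] N_split[of "\<lambda>j. f wstar j"] N_split[of m] msum i by simp
  qed
qed


end


lemma fin_argmin:
  fixes g :: "'a \<Rightarrow> real"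
  assumes "finite A" "A \<noteq> {}" shows "\<exists>a\<in>A. \<forall>b\<in>A. g a \<le> g b"
proof -
  have "Min (g ` A) \<in> g ` A" using assms by simp
  then obtain a where a: "a \<in> A" "g a = Min (g ` A)" by auto
  have "\<forall>b\<in>A. g a \<le> g b" using a assms by simp
  then show ?thesis using a by blast
qed

context lag begin
definition good where "good w \<longleftrightarrow> w (N - 1) = 0 \<and> (\<forall>i\<ge>N. w i = 0) \<and> (\<forall>i<N. f w i = m i)"

lemma union_lmeas: "(\<Union>i\<in>I. C w i) \<in> lmeasurable" if "finite I"
  using that by (intro fmeasurable.finite_UN cell_lmeas) auto

lemma cell_ne: assumes "good w" "i < N" shows "C w i \<noteq> {}"
proof
  assume "C w i = {}"
  then have "f w i = 0" by simp
  then show False using assms mpos unfolding good_def by auto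
qed

lemma uniqueness: assumes gw: "good w" and gw': "good w'" shows "w = w'"
proof -
  define d where "d i = w' i - w i" for i
  define Mx where "Mx = Max (d ` {..<N})"
  define I where "I = {i. i < N \<and> d i = Mx}"
  define J where "J = {..<N} - I"
  have Mx_ge: "d i \<le> Mx" if "i < N" for i unfolding Mx_def using that by (intro Max_ge) auto
  have "Mx \<in> d ` {..<N}" unfolding Mx_def using N2 by (intro Max_in) (auto simp: lessThan_empty_iff)
  then have Ine: "I \<noteq> {}" unfolding I_def by auto
  have finI: "finite I" and finJ: "finite J" and IN: "I \<subseteq> {..<N}" and JN: "J \<subseteq> {..<N}"
    unfolding I_def J_def by auto
  have w'eq: "w' i = w i + d i" for i unfolding d_def by simp
  show "w = w'"
  proof (cases "J = {}")
    case True
    then have dM: "d i = Mx" if "i < N" for i using that unfolding J_def I_def by auto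
    have "N - 1 < N" using N2 by simp
    moreover have "d (N - 1) = 0" using gw gw' unfolding good_def d_def by simp
    ultimately have d0: "d i = 0" if "i < N" for i using that dM by metis
    show ?thesis
    proof (rule ext)
      fix i show "w i = w' i"
      proof (cases "i < N")
        case True then show ?thesis using d0 w'eq by simp
      next
        case False then show ?thesis using gw gw' unfolding good_def by simp
      qed
    qed
  next
    case False
    define \<delta> where "\<delta> = Mx - Max (d ` J)"
    have "Max (d ` J) \<in> d ` J" using False finJ by (intro Max_in) auto
    then obtain j0 where j0: "j0 \<in> J" "Max (d ` J) = d j0" by auto
    then have "j0 < N" "d j0 \<noteq> Mx" unfolding J_def I_def by auto
    then have dpos: "\<delta> > 0" unfolding \<delta>_def j0(2) using Mx_ge[of j0] by simp
    have dJ: "d j \<le> Mx - \<delta>" if "j \<in> J" for j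
      unfolding \<delta>_def using that finJ by simp
    have dI: "d i = Mx" if "i \<in> I" for i using that unfolding I_def by auto
    define g where "g x i = (norm (x - z i))\<^sup>2 - w i" for x i
    define U where "U = (\<Union>i\<in>I. C w i)"
    define U' where "U' = (\<Union>i\<in>I. C w' i)"
    have UU': "U \<subseteq> U'" unfolding U_def U'_def
    proof (intro UN_mono order.refl cell_mono)
      fix i j assume "i \<in> I" "j < N"
      then show "w i - w j \<le> w' i - w' j" using dI Mx_ge unfolding w'eq by simp
    qed
    have Ul: "U \<in> lmeasurable" "U' \<in> lmeasurable" unfolding U_def U'_def using finI union_lmeas by auto
    have feq: "\<forall>i\<in>I. f w' i = f w i" using gw gw' IN unfolding good_def by auto
    have "measure lebesgue U' = (\<Sum>i\<in>I. f w' i)" unfolding U'_def by (rule union_measure[OF IN])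
    also have "\<dots> = (\<Sum>i\<in>I. f w i)" using feq by (intro sum.cong) auto
    also have "\<dots> = measure lebesgue U" unfolding U_def by (rule union_measure[OF IN, symmetric])
    finally have meq: "measure lebesgue U' = measure lebesgue U" .
    have "measure lebesgue (U' - U) = measure lebesgue U' - measure lebesgue U"
      by (rule measurable_measure_Diff[OF Ul(2) fmeasurableD[OF Ul(1)] UU'])
    then have "measure lebesgue (U' - U) = 0" using meq by simp
    then have negl: "negligible (U' - U)"
      using Ul by (simp add: negligible_iff_measure0 fmeasurable.Diff)
    define P1 where "P1 = \<Omega> \<inter> (\<Union>i\<in>I. \<Inter>j\<in>J. {x. g x i < g x j + \<delta>})"
    define P2 where "P2 = \<Omega> \<inter> (\<Union>j\<in>J. \<Inter>i\<in>I. {x. g x j < g x i})"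
    have o1: "open P1" unfolding P1_def g_def using finJ opn
      by (intro open_Int open_UN open_INT ballI open_Collect_less continuous_intros) auto
    have o2: "open P2" unfolding P2_def g_def using finI opn
      by (intro open_Int open_UN open_INT ballI open_Collect_less continuous_intros) auto
    have cov: "\<Omega> \<subseteq> P1 \<union> P2"
    proof
      fix x assume x: "x \<in> \<Omega>"
      obtain i0 where i0: "i0 \<in> I" "\<forall>i\<in>I. g x i0 \<le> g x i"
        using fin_argmin[OF finI Ine, of "g x"] by blast
      obtain j0 where j0: "j0 \<in> J" "\<forall>j\<in>J. g x j0 \<le> g x j"
        using fin_argmin[OF finJ False, of "g x"] by blast
      show "x \<in> P1 \<union> P2"
      proof (cases "g x j0 < g x i0")
        case True
        have "\<forall>i\<in>I. g x j0 < g x i" using True i0 by (auto intro: less_le_trans)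
        then have "x \<in> P2" unfolding P2_def using x j0(1) by blast
        then show ?thesis by simp
      next
        case False
        have "\<forall>j\<in>J. g x i0 < g x j + \<delta>" using False j0 dpos by (smt (verit))
        then have "x \<in> P1" unfolding P1_def using x i0(1) by blast
        then show ?thesis by simp
      qed
    qed
    have ne1: "P1 \<inter> \<Omega> \<noteq> {}"
    proof -
      obtain i where i: "i \<in> I" using Ine by auto
      then obtain x where x: "x \<in> C w i" using cell_ne[OF gw] IN by blast
      then have xO: "x \<in> \<Omega>" and H: "\<forall>j<N. g x i \<le> g x j" unfolding laguerre_cell_def g_def by auto
      have "\<forall>j\<in>J. g x i < g x j + \<delta>" using H JN dpos by (smt (verit) lessThan_iff subsetD)
      then have "x \<in> P1" unfolding P1_def using i xO by blast
      then show ?thesis using P1_def by auto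
    qed
    have ne2: "P2 \<inter> \<Omega> \<noteq> {}"
    proof -
      obtain j where j: "j \<in> J" using False by auto
      then obtain x where x: "x \<in> C w' j" using cell_ne[OF gw'] JN by blast
      then have xO: "x \<in> \<Omega>" and H: "\<forall>i<N. g x j - d j \<le> g x i - d i"
        unfolding laguerre_cell_def g_def w'eq by (auto simp: algebra_simps)
      have "g x j < g x i" if "i \<in> I" for i
      proof -
        have "i < N" using that IN by auto
        then have "g x j - d j \<le> g x i - d i" using H by simp
        then show ?thesis using dI[OF that] dJ[OF j] dpos by linarith
      qed
      then have "x \<in> P2" unfolding P2_def using j xO by blast
      then show ?thesis using P2_def by auto
    qed
    have "P1 \<inter> P2 \<inter> \<Omega> \<noteq> {}"
      using connectedD[OF convex_connected[OF cvx] o1 o2 _ cov] ne1 ne2 by blast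
    then have Gne: "P1 \<inter> P2 \<noteq> {}" by blast
    have "P1 \<inter> P2 \<subseteq> U' - U"
    proof
      fix x assume x: "x \<in> P1 \<inter> P2"
      then have xO: "x \<in> \<Omega>" unfolding P1_def by auto
      from x obtain j where j: "j \<in> J" "\<forall>i\<in>I. g x j < g x i" unfolding P2_def by auto
      from x obtain i where i: "i \<in> I" "\<forall>j\<in>J. g x i < g x j + \<delta>" unfolding P1_def by auto
      have "x \<notin> C w i'" if "i' \<in> I" for i'
      proof
        assume "x \<in> C w i'"
        moreover have "j < N" using j JN by auto
        ultimately have "g x i' \<le> g x j" unfolding laguerre_cell_def g_def by auto
        moreover have "g x j < g x i'" using j that by auto
        ultimately show False by linarith
      qed
      then have nU: "x \<notin> U" unfolding U_def by blast
      obtain i' where i': "i' \<in> I" "\<forall>l\<in>I. g x i' \<le> g x l"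
        using fin_argmin[OF finI Ine, of "g x"] by blast
      have "(norm (x - z i'))\<^sup>2 - w' i' \<le> (norm (x - z l))\<^sup>2 - w' l" if l: "l < N" for l
      proof (cases "l \<in> I")
        case True
        have "g x i' \<le> g x l" using i' True by auto
        then show ?thesis using dI[OF True] dI[OF i'(1)] unfolding w'eq g_def by simp
      next
        case False
        then have lJ: "l \<in> J" unfolding J_def using l by auto
        have "g x i' \<le> g x i" using i' i by auto
        moreover have "g x i < g x l + \<delta>" using i lJ by auto
        moreover have "d l \<le> Mx - \<delta>" using dJ lJ by auto
        ultimately show ?thesis using dI[OF i'(1)] unfolding w'eq g_def by auto
      qed
      then have "x \<in> C w' i'" using xO unfolding laguerre_cell_def by auto
      then have "x \<in> U'" unfolding U'_def using i' by auto
      with nU show "x \<in> U' - U" by simp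
    qed
    then have "negligible (P1 \<inter> P2)" using negl negligible_subset by blast
    then show ?thesis using open_not_negligible[OF open_Int[OF o1 o2] Gne] by simp
  qed
qed

lemma wstar_good: "good (w_star \<Omega> N m z)"
proof -
  obtain w where w: "good w" using existence unfolding good_def by auto
  have "w_star \<Omega> N m z = w" unfolding w_star_def
    apply (rule the_equality)
    using w uniqueness unfolding good_def by auto
  then show ?thesis using w by simp
qed

lemma centroid_bound: assumes i: "i < N" shows "norm (centroid_map \<Omega> N m z i) \<le> R"
proof -
  let ?S = "C (w_star \<Omega> N m z) i"
  have Sl: "?S \<in> lmeasurable" by (rule cell_lmeas)
  have meq: "measure lebesgue ?S = m i" using wstar_good i unfolding good_def by auto
  have nb: "norm x \<le> R" if "x \<in> ?S" for x
  proof -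
    have "x \<in> ball 0 R" using that cell_sub bnd by blast
    then show ?thesis by simp
  qed
  have intx: "(\<lambda>x. x) integrable_on ?S"
  proof -
    have "(\<lambda>x::real^3. x) absolutely_integrable_on ?S"
      apply (rule measurable_bounded_by_integrable_imp_absolutely_integrable[where g="\<lambda>_. R"])
      using Sl nb continuous_imp_measurable_on_sets_lebesgue[of ?S "\<lambda>x. x"]
      by (auto simp: integrable_on_const fmeasurableD continuous_on_id)
    then show ?thesis using set_lebesgue_integral_eq_integral(1) by blast
  qed
  have "norm (integral ?S (\<lambda>x. x)) \<le> integral ?S (\<lambda>x. R)"
    by (rule integral_norm_bound_integral[OF intx integrable_on_const[OF Sl] nb])
  also have "integral ?S (\<lambda>x. R) = integral ?S (\<lambda>x. R *\<^sub>R (1::real))" by simp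
  also have "\<dots> = R * m i" using lmeasure_integral[OF Sl] meq by (simp only: integral_cmul) simp
  finally have "norm (integral ?S (\<lambda>x. x)) \<le> R * m i" .
  moreover have mi: "m i > 0" using mpos i by simp
  ultimately show ?thesis unfolding centroid_map_def
    by (simp add: divide_simps abs_of_pos mult.commute)
qed

end


lemma Jmat_comp: "Jmat v $ 1 = - (v $ 2)" "Jmat v $ 2 = v $ 1" "Jmat v $ 3 = 0"
  by (simp_all add: Jmat_def)

lemma inner_Jmat: "v \<bullet> Jmat v = 0"
  by (simp add: inner_vec_def sum_3 Jmat_comp)

lemma norm_Jmat: "norm (Jmat v) \<le> norm v"
proof -
  have "Jmat v \<bullet> Jmat v \<le> v \<bullet> v"
    by (simp add: inner_vec_def sum_3 Jmat_comp)
  then show ?thesis by (simp add: norm_le)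
qed

lemma Jmat_diff: "Jmat (a - b) = Jmat a - Jmat b"
  by (simp add: vec_eq_iff forall_3 Jmat_comp)

lemma sqrt_bound: "sqrt (a\<^sup>2 + e\<^sup>2) \<le> a + e" if "a \<ge> 0" "e \<ge> 0" for a e :: real
proof -
  have "a\<^sup>2 + e\<^sup>2 \<le> (a + e)\<^sup>2" using that by (simp add: power2_eq_square algebra_simps)
  then have "sqrt (a\<^sup>2 + e\<^sup>2) \<le> sqrt ((a + e)\<^sup>2)" by (rule real_sqrt_le_mono)
  then show ?thesis using that by simp
qed

theorem lemma4p13:
  fixes \<Omega> :: "(real^3) set" and N :: nat and m :: "nat \<Rightarrow> real" and T R :: real
    and zbar :: "nat \<Rightarrow> real^3" and z z' :: "real \<Rightarrow> nat \<Rightarrow> real^3"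
  assumes "open \<Omega>" and "bounded \<Omega>" and "convex \<Omega>" and "measure lebesgue \<Omega> = 1"
    and "N \<ge> 2"
    and "\<forall>i<N. m i > 0" and "(\<Sum>i<N. m i) = 1"
    and "T > 0"
    and "in_D N zbar"
    and "R > 0" and "\<Omega> \<subseteq> ball 0 R"
    and "\<forall>t\<in>{0..T}. in_D N (z t)"
    and "\<forall>i<N. \<forall>t\<in>{0..T}. ((\<lambda>s. z s i) has_vector_derivative z' t i) (at t within {0..T})"
    and "\<forall>i<N. continuous_on {0..T} (\<lambda>t. z' t i)"
    and "\<forall>i<N. \<forall>t\<in>{0..T}. z' t i = Jmat (z t i - centroid_map \<Omega> N m (z t) i)"
    and "\<forall>i<N. z 0 i = zbar i"
  shows "\<forall>i<N. (\<forall>t\<in>{0..T}. norm (z t i) \<le> norm (zbar i) + R * T) \<and>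
           (\<forall>t\<in>{0<..<T}. norm (vector_derivative (\<lambda>s. z s i) (at t))
                              \<le> norm (zbar i) + R * (1 + T))"
proof (intro allI impI)
  note A = assms
  have lagt: "lag \<Omega> N m R (z t)" if "t \<in> {0..T}" for t
    using A that by unfold_locales auto
  fix i assume i: "i < N"
  define y where "y s = z s i" for s
  define c where "c s = centroid_map \<Omega> N m (z s) i" for s
  have cb: "norm (c t) \<le> R" if "t \<in> {0..T}" for t
    unfolding c_def using lag.centroid_bound[OF lagt[OF that] i] .
  have der: "(y has_vector_derivative z' t i) (at t within {0..T})" if "t \<in> {0..T}" for t
    unfolding y_def using A(13) i that by auto
  have zeq: "z' t i = Jmat (y t - c t)" if "t \<in> {0..T}" for t
    unfolding y_def c_def using A(15) i that by auto
  have cont: "continuous_on {0..T} y"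
    unfolding continuous_on_eq_continuous_within using der has_vector_derivative_continuous by blast
  have derat: "(y has_vector_derivative z' t i) (at t)" if "t \<in> {0<..<T}" for t
  proof -
    have "(y has_vector_derivative z' t i) (at t within {0<..<T})"
      using der[of t] that by (auto intro: has_vector_derivative_within_subset)
    then show ?thesis using that by (subst (asm) has_vector_derivative_within_open) auto
  qed
  have key: "y t \<bullet> z' t i \<le> norm (y t) * R" if "t \<in> {0..T}" for t
  proof -
    have "y t \<bullet> z' t i = - (y t \<bullet> Jmat (c t))"
      unfolding zeq[OF that] Jmat_diff inner_diff_right inner_Jmat by simp
    also have "\<dots> \<le> norm (y t) * norm (Jmat (c t))"
      using Cauchy_Schwarz_ineq2[of "y t" "Jmat (c t)"] by linarith
    also have "\<dots> \<le> norm (y t) * R"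
      using norm_Jmat[of "c t"] cb[OF that] by (intro mult_left_mono) auto
    finally show ?thesis .
  qed
  have bound1: "norm (y t) \<le> norm (zbar i) + R * T" if t: "t \<in> {0..T}" for t
  proof (rule field_le_epsilon)
    fix e :: real assume e: "e > 0"
    define \<phi> where "\<phi> s = sqrt (y s \<bullet> y s + e\<^sup>2) - R * s" for s
    have "\<phi> t \<le> \<phi> 0"
    proof (cases "t = 0")
      case True then show ?thesis by simp
    next
      case False
      then have t0: "0 < t" using t by simp
      show ?thesis
      proof (rule DERIV_nonpos_imp_decreasing_open[of 0 t])
        show "0 \<le> t" using t0 by simp
        show "continuous_on {0..t} \<phi>"
          unfolding \<phi>_def using t
          by (intro continuous_intros continuous_on_subset[OF cont]) auto
        fix s assume s: "0 < s" "s < t"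
        then have sT: "s \<in> {0<..<T}" "s \<in> {0..T}" using t by auto
        have d1: "(y has_derivative (\<lambda>h. h *\<^sub>R z' s i)) (at s)"
          using derat[OF sT(1)] by (simp add: has_vector_derivative_def)
        have d2: "((\<lambda>s. y s \<bullet> y s) has_real_derivative (2 * (y s \<bullet> z' s i))) (at s)"
          unfolding has_field_derivative_def
          by (rule has_derivative_eq_rhs[OF has_derivative_inner[OF d1 d1]])
            (auto simp: fun_eq_iff inner_commute algebra_simps)
        have gpos: "0 < y s \<bullet> y s + e\<^sup>2" using e by (simp add: add_nonneg_pos)
        have d3: "((\<lambda>s. y s \<bullet> y s + e\<^sup>2) has_real_derivative (2 * (y s \<bullet> z' s i) + 0)) (at s)"
          by (rule DERIV_add[OF d2 DERIV_const])
        have d4: "((\<lambda>s. sqrt (y s \<bullet> y s + e\<^sup>2)) has_real_derivative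
                   (inverse (sqrt (y s \<bullet> y s + e\<^sup>2)) / 2 * (2 * (y s \<bullet> z' s i) + 0))) (at s)"
          by (rule DERIV_chain2[OF DERIV_real_sqrt[OF gpos] d3])
        have d5: "(\<phi> has_real_derivative
                   (inverse (sqrt (y s \<bullet> y s + e\<^sup>2)) / 2 * (2 * (y s \<bullet> z' s i) + 0) - R)) (at s)"
          unfolding \<phi>_def by (rule DERIV_diff[OF d4 DERIV_cmult_Id])
        define q where "q = sqrt (y s \<bullet> y s + e\<^sup>2)"
        have qpos: "q > 0" unfolding q_def using gpos by simp
        have "norm (y s) \<le> q" unfolding q_def
          by (metis le_add_same_cancel1 norm_eq_sqrt_inner real_sqrt_le_mono zero_le_power2)
        then have "y s \<bullet> z' s i \<le> q * R" using key[OF sT(2)] A(10)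
          by (smt (verit) mult_right_mono)
        then have "(y s \<bullet> z' s i) / q \<le> R" using qpos by (simp add: divide_simps mult.commute)
        then have "inverse q / 2 * (2 * (y s \<bullet> z' s i) + 0) - R \<le> 0"
          by (simp add: divide_simps)
        then show "\<exists>y. (\<phi> has_real_derivative y) (at s) \<and> y \<le> 0"
          using d5 unfolding q_def by blast
      qed
    qed
    then have "sqrt (y t \<bullet> y t + e\<^sup>2) \<le> sqrt (y 0 \<bullet> y 0 + e\<^sup>2) + R * t"
      unfolding \<phi>_def by simp
    moreover have "norm (y t) \<le> sqrt (y t \<bullet> y t + e\<^sup>2)"
      by (metis le_add_same_cancel1 norm_eq_sqrt_inner real_sqrt_le_mono zero_le_power2)
    moreover have "sqrt (y 0 \<bullet> y 0 + e\<^sup>2) \<le> norm (zbar i) + e"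
    proof -
      have "y 0 \<bullet> y 0 = (norm (zbar i))\<^sup>2" unfolding y_def using A(16) i
        by (simp add: power2_norm_eq_inner)
      then show ?thesis using sqrt_bound[of "norm (zbar i)" e] e by simp
    qed
    moreover have "R * t \<le> R * T" using t A(10) by (intro mult_left_mono) auto
    ultimately show "norm (y t) \<le> norm (zbar i) + R * T + e" by linarith
  qed
  have part2: "norm (vector_derivative y (at t)) \<le> norm (zbar i) + R * (1 + T)"
    if t: "t \<in> {0<..<T}" for t
  proof -
    have tT: "t \<in> {0..T}" using t by auto
    have "vector_derivative y (at t) = z' t i" by (rule vector_derivative_at[OF derat[OF t]])
    then have "norm (vector_derivative y (at t)) = norm (Jmat (y t - c t))" using zeq[OF tT] by simp
    also have "\<dots> \<le> norm (y t - c t)" by (rule norm_Jmat)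
    also have "\<dots> \<le> norm (y t) + norm (c t)" by (rule norm_triangle_ineq4)
    also have "\<dots> \<le> norm (zbar i) + R * T + R" using bound1[OF tT] cb[OF tT] by simp
    finally show ?thesis by (simp add: algebra_simps)
  qed
  have yeq: "(\<lambda>s. z s i) = y" unfolding y_def by simp
  show "(\<forall>t\<in>{0..T}. norm (z t i) \<le> norm (zbar i) + R * T) \<and>
           (\<forall>t\<in>{0<..<T}. norm (vector_derivative (\<lambda>s. z s i) (at t))
                              \<le> norm (zbar i) + R * (1 + T))"
    unfolding yeq using bound1 part2 unfolding y_def by simp
qed

end
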